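(* Let $K:=F'_x+p\,F'_y$. For every polynomial $r(x,y,p)=\sum_{j} r_j(x,y)p^j$ in $p$ with coefficients holomorphic on $U$, the following equality of holomorphic $2$-forms holds on the surface $S$ (i.e. after restriction to $S$): $$d\Bigl(\frac{r(x,y,p)}{F'_p(x,y,p)}(dy-p\,dx)\Bigr)=\Bigl((r'_x+p\,r'_y)-\Bigl(\frac{K}{F'_p}\Bigr)'_p\, r-\frac{K}{F'_p}\,r'_p\Bigr)\frac{dx\wedge dy}{F'_p}.$$
   Context: Let $d\ge 3$, let $U\subset\mathbb{C}^2$ be open with coordinates $(x,y)$, and let $F(x,y,p)=\sum_{i=0}^d a_i(x,y)p^{d-i}$ with $a_i$ holomorphic on $U$ and $a_0\equiv 1$, such that for every $(x,y)\in U$ the $d$ roots in $p$ of $F(x,y,p)$ are pairwise distinct (so $F$ and $F'_p$ have no common zero). Let $S\subset U\times\mathbb{C}$ be the surface $\{F(x,y,p)=0\}$ (on which $F'_p\neq 0$). Subscripts $'_x,'_y,'_p$ denote partial derivatives with respect to $x,y,p$. *)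

theory Defs
  imports "HOL-Analysis.Analysis"
begin

text \<open>Holomorphy of a function of two complex variables on an open set of C^2:
  complex (Frechet) differentiability, i.e. the real derivative is C-linear.\<close>
definition holo2 :: "(complex \<times> complex \<Rightarrow> complex) \<Rightarrow> (complex \<times> complex) set \<Rightarrow> bool" where
  "holo2 f U \<longleftrightarrow> (\<forall>z\<in>U. \<exists>a b. (f has_derivative (\<lambda>(h, k). a * h + b * k)) (at z))"

definition pdx :: "(complex \<Rightarrow> complex \<Rightarrow> complex \<Rightarrow> complex) \<Rightarrow> complex \<Rightarrow> complex \<Rightarrow> complex \<Rightarrow> complex" where
  "pdx f x y p = deriv (\<lambda>t. f t y p) x"
definition pdy :: "(complex \<Rightarrow> complex \<Rightarrow> complex \<Rightarrow> complex) \<Rightarrow> complex \<Rightarrow> complex \<Rightarrow> complex \<Rightarrow> complex" where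
  "pdy f x y p = deriv (\<lambda>t. f x t p) y"
definition pdp :: "(complex \<Rightarrow> complex \<Rightarrow> complex \<Rightarrow> complex) \<Rightarrow> complex \<Rightarrow> complex \<Rightarrow> complex \<Rightarrow> complex" where
  "pdp f x y p = deriv (\<lambda>t. f x y t) p"

definition Fpoly :: "(nat \<Rightarrow> complex \<times> complex \<Rightarrow> complex) \<Rightarrow> nat \<Rightarrow> complex \<Rightarrow> complex \<Rightarrow> complex \<Rightarrow> complex" where
  "Fpoly a d x y p = (\<Sum>i=0..d. a i (x, y) * p ^ (d - i))"

definition rpoly :: "(nat \<Rightarrow> complex \<times> complex \<Rightarrow> complex) \<Rightarrow> nat \<Rightarrow> complex \<Rightarrow> complex \<Rightarrow> complex \<Rightarrow> complex" where
  "rpoly r m x y p = (\<Sum>j=0..m. r j (x, y) * p ^ j)"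

end

theory Submission
  imports Defs "HOL-Computational_Algebra.Polynomial"
begin


lemma my_pderiv_sum: "pderiv (\<Sum>k\<in>A. f k) = (\<Sum>k\<in>A. pderiv (f k))"
  by (induct A rule: infinite_finite_induct) (simp_all add: pderiv_add)

lemma simple_root:
  fixes c :: "nat \<Rightarrow> complex"
  assumes c1: "c d = 1" and d1: "d \<ge> 1"
    and card: "card {s. (\<Sum>k=0..d. c k * s^k) = 0} = d"
    and root: "(\<Sum>k=0..d. c k * s0^k) = 0"
  shows "(\<Sum>k=0..d. of_nat k * c k * s0^(k-1)) \<noteq> 0"
proof
  assume z: "(\<Sum>k=0..d. of_nat k * c k * s0^(k-1)) = 0"
  define P where "P = (\<Sum>k=0..d. monom (c k) k)"
  have polyP: "poly P s = (\<Sum>k=0..d. c k * s^k)" for s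
    by (simp add: P_def poly_sum poly_monom)
  have dP: "pderiv P = (\<Sum>k=0..d. monom (of_nat k * c k) (k-1))"
    by (simp add: P_def my_pderiv_sum pderiv_monom)
  have polydP: "poly (pderiv P) s = (\<Sum>k=0..d. of_nat k * c k * s^(k-1))" for s
    by (simp add: dP poly_sum poly_monom)
  have coeffP: "coeff P n = (if n \<le> d then c n else 0)" for n
    by (simp add: P_def coeff_sum coeff_monom)
  have degP: "degree P = d"
  proof (rule antisym)
    show "degree P \<le> d" by (rule degree_le) (simp add: coeffP)
    show "d \<le> degree P" by (rule le_degree) (simp add: coeffP c1)
  qed
  have P0: "P \<noteq> 0" using degP d1 by auto
  have "coeff (pderiv P) (d-1) \<noteq> 0"
    using d1 by (simp add: coeff_pderiv coeffP c1)
  hence dP0: "pderiv P \<noteq> 0" by auto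
  have "order s0 (pderiv P) \<noteq> 0" using dP0 z polydP order_root by metis
  moreover have "order s0 P = Suc (order s0 (pderiv P))"
    using order_pderiv[OF P0] root polyP by metis
  ultimately have "2 \<le> order s0 P" by simp
  hence "[:-s0, 1:]^2 dvd P" by (simp add: order_divides)
  then obtain q where q: "P = [:-s0, 1:]^2 * q" by (elim dvdE)
  have q0: "q \<noteq> 0" using P0 q by auto
  have "degree P = 2 + degree q" using q q0 by (simp add: degree_mult_eq degree_power_eq)
  hence dq: "degree q + 2 = d" using degP by simp
  have sub: "{s. poly P s = 0} \<subseteq> insert s0 {s. poly q s = 0}"
    using q by auto
  have "card {s. poly P s = 0} \<le> card (insert s0 {s. poly q s = 0})"
    by (rule card_mono) (use q0 poly_roots_finite sub in auto)
  also have "\<dots> \<le> Suc (card {s. poly q s = 0})" by (simp add: card_insert_le_m1)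
  also have "\<dots> \<le> Suc (degree q)" using card_poly_roots_bound[OF q0] by simp
  finally have "card {s. poly P s = 0} < d" using dq by simp
  thus False using card polyP by simp
qed
lemma holo2_dx:
  assumes "holo2 f U" "(x, y) \<in> U"
  shows "((\<lambda>t. f (t, y)) has_field_derivative deriv (\<lambda>t. f (t, y)) x) (at x)"
proof -
  obtain A B where h: "(f has_derivative (\<lambda>(h, k). A * h + B * k)) (at (x, y))"
    using assms unfolding holo2_def by blast
  have p: "((\<lambda>t. (t, y)) has_derivative (\<lambda>h. (h, 0))) (at x)"
    by (auto intro!: derivative_eq_intros)
  have "((\<lambda>t. f (t, y)) has_derivative (\<lambda>h. (\<lambda>(h, k). A * h + B * k) (h, 0))) (at x)"
    using has_derivative_compose[OF p h] by simp
  hence "((\<lambda>t. f (t, y)) has_field_derivative A) (at x)"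
    unfolding has_field_derivative_def by (simp add: mult.commute[of _ A] mult.commute[of _ B])
  thus ?thesis using DERIV_imp_deriv by metis
qed

lemma holo2_dy:
  assumes "holo2 f U" "(x, y) \<in> U"
  shows "((\<lambda>t. f (x, t)) has_field_derivative deriv (\<lambda>t. f (x, t)) y) (at y)"
proof -
  obtain A B where h: "(f has_derivative (\<lambda>(h, k). A * h + B * k)) (at (x, y))"
    using assms unfolding holo2_def by blast
  have p: "((\<lambda>t. (x, t)) has_derivative (\<lambda>h. (0, h))) (at y)"
    by (auto intro!: derivative_eq_intros)
  have "((\<lambda>t. f (x, t)) has_derivative (\<lambda>h. (\<lambda>(h, k). A * h + B * k) (0, h))) (at y)"
    using has_derivative_compose[OF p h] by simp
  hence "((\<lambda>t. f (x, t)) has_field_derivative B) (at y)"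
    unfolding has_field_derivative_def by (simp add: mult.commute[of _ A] mult.commute[of _ B])
  thus ?thesis using DERIV_imp_deriv by metis
qed

lemma deriv_psum:
  fixes c :: "nat \<Rightarrow> complex \<Rightarrow> complex"
  assumes "\<And>k. k \<in> S \<Longrightarrow> (c k has_field_derivative c' k) (at x)"
    and "(\<psi> has_field_derivative \<psi>') (at x)"
  shows "((\<lambda>t. \<Sum>k\<in>S. c k t * \<psi> t ^ e k) has_field_derivative
     (\<Sum>k\<in>S. c' k * \<psi> x ^ e k) + (\<Sum>k\<in>S. of_nat (e k) * c k x * \<psi> x ^ (e k - 1)) * \<psi>') (at x)"
proof -
  have "((\<lambda>t. \<Sum>k\<in>S. c k t * \<psi> t ^ e k) has_field_derivative
     (\<Sum>k\<in>S. c' k * \<psi> x ^ e k + c k x * (of_nat (e k) * (\<psi>' * \<psi> x ^ (e k - Suc 0))))) (at x)"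
    by (rule DERIV_sum, rule DERIV_cong[OF DERIV_mult[OF assms(1) DERIV_power[OF assms(2)]]])
      (simp_all add: mult_ac)
  moreover have "(\<Sum>k\<in>S. c' k * \<psi> x ^ e k + c k x * (of_nat (e k) * (\<psi>' * \<psi> x ^ (e k - Suc 0))))
     = (\<Sum>k\<in>S. c' k * \<psi> x ^ e k) + (\<Sum>k\<in>S. of_nat (e k) * c k x * \<psi> x ^ (e k - 1)) * \<psi>'"
    by (simp add: sum.distrib sum_distrib_right sum_distrib_left mult_ac)
  ultimately show ?thesis by simp
qed

lemma deriv_zero_open:
  fixes h :: "complex \<Rightarrow> complex"
  assumes "(h has_field_derivative D) (at x)" "open S" "x \<in> S" "\<And>t. t \<in> S \<Longrightarrow> h t = 0"
  shows "D = 0"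
proof -
  have "((\<lambda>_. 0) has_field_derivative 0) (at x)" by simp
  hence "(h has_field_derivative 0) (at x)"
    by (rule has_field_derivative_transform_within_open[OF _ assms(2,3)]) (simp add: assms(4))
  thus ?thesis using assms(1) DERIV_unique by blast
qed



theorem lemma1:
  fixes a :: "nat \<Rightarrow> complex \<times> complex \<Rightarrow> complex" and d :: nat
    and U :: "(complex \<times> complex) set"
    and r :: "nat \<Rightarrow> complex \<times> complex \<Rightarrow> complex" and m :: nat
    and V :: "(complex \<times> complex) set" and \<phi> :: "complex \<times> complex \<Rightarrow> complex"
  assumes "d \<ge> 3" and "open U"
    and "\<forall>i\<le>d. holo2 (a i) U"
    and "\<forall>z\<in>U. a 0 z = 1"
    and "\<forall>x y. (x, y) \<in> U \<longrightarrow> card {p. Fpoly a d x y p = 0} = d"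
    and "\<forall>j\<le>m. holo2 (r j) U"
    and "open V" and "V \<subseteq> U" and "holo2 \<phi> V"
    and "\<forall>x y. (x, y) \<in> V \<longrightarrow> Fpoly a d x y (\<phi> (x, y)) = 0"
  shows "\<forall>x y. (x, y) \<in> V \<longrightarrow>
    (let F = Fpoly a d; R = rpoly r m;
         K = (\<lambda>x y p. pdx F x y p + p * pdy F x y p);
         Q = (\<lambda>x y p. K x y p / pdp F x y p);
         G = (\<lambda>x y. R x y (\<phi> (x, y)) / pdp F x y (\<phi> (x, y)));
         p0 = \<phi> (x, y)
     in deriv (\<lambda>t. G t y) x + deriv (\<lambda>t. G x t * \<phi> (x, t)) y
        = ((pdx R x y p0 + p0 * pdy R x y p0) - pdp Q x y p0 * R x y p0
            - Q x y p0 * pdp R x y p0) / pdp F x y p0)"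
  
proof (intro allI impI)
  fix x y assume xyV: "(x, y) \<in> V"
  have xyU: "(x, y) \<in> U" using xyV assms(8) by auto
  note ha = assms(3) and hr = assms(6)
  define F where "F = Fpoly a d"
  define R where "R = rpoly r m"
  have Frev: "F t s p = (\<Sum>k=0..d. a (d-k) (t, s) * p^k)" for t s p
    unfolding F_def Fpoly_def by (subst sum.atLeastAtMost_rev) (simp add: diff_diff_cancel)
  have Rdef: "R t s p = (\<Sum>j=0..m. r j (t, s) * p^j)" for t s p
    unfolding R_def rpoly_def by simp
  have Fpf: "pdp F t s p = (\<Sum>k=0..d. of_nat k * a (d-k) (t, s) * p^(k-1))" for t s p
  proof -
    have "((\<lambda>q. \<Sum>k=0..d. (\<lambda>_. a (d-k) (t, s)) q * (\<lambda>q. q) q ^ id k) has_field_derivative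
       (\<Sum>k=0..d. 0 * p ^ id k) + (\<Sum>k=0..d. of_nat (id k) * a (d-k) (t, s) * p ^ (id k - 1)) * 1) (at p)"
      by (rule deriv_psum) auto
    thus ?thesis unfolding pdp_def Frev by (simp add: DERIV_imp_deriv)
  qed
  define p0 where "p0 = \<phi> (x, y)"
  define Ax where "Ax i = deriv (\<lambda>t. a i (t, y)) x" for i
  define Ay where "Ay i = deriv (\<lambda>t. a i (x, t)) y" for i
  define Rx where "Rx j = deriv (\<lambda>t. r j (t, y)) x" for j
  define Ry where "Ry j = deriv (\<lambda>t. r j (x, t)) y" for j
  define phx where "phx = deriv (\<lambda>t. \<phi> (t, y)) x"
  define phy where "phy = deriv (\<lambda>t. \<phi> (x, t)) y"
  have dAx: "k \<in> {0..d} \<Longrightarrow> ((\<lambda>t. a (d-k) (t, y)) has_field_derivative Ax (d-k)) (at x)" for k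
    unfolding Ax_def by (rule holo2_dx[OF _ xyU]) (use ha in auto)
  have dAy: "k \<in> {0..d} \<Longrightarrow> ((\<lambda>t. a (d-k) (x, t)) has_field_derivative Ay (d-k)) (at y)" for k
    unfolding Ay_def by (rule holo2_dy[OF _ xyU]) (use ha in auto)
  have dRx: "j \<in> {0..m} \<Longrightarrow> ((\<lambda>t. r j (t, y)) has_field_derivative Rx j) (at x)" for j
    unfolding Rx_def by (rule holo2_dx[OF _ xyU]) (use hr in auto)
  have dRy: "j \<in> {0..m} \<Longrightarrow> ((\<lambda>t. r j (x, t)) has_field_derivative Ry j) (at y)" for j
    unfolding Ry_def by (rule holo2_dy[OF _ xyU]) (use hr in auto)
  have dphx: "((\<lambda>t. \<phi> (t, y)) has_field_derivative phx) (at x)"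
    unfolding phx_def by (rule holo2_dx[OF assms(9) xyV])
  have dphy: "((\<lambda>t. \<phi> (x, t)) has_field_derivative phy) (at y)"
    unfolding phy_def by (rule holo2_dy[OF assms(9) xyV])
  have dAxc: "k \<in> {0..d} \<Longrightarrow> ((\<lambda>t. of_nat k * a (d-k) (t, y)) has_field_derivative of_nat k * Ax (d-k)) (at x)" for k
    by (rule DERIV_cmult, rule dAx)
  have dAyc: "k \<in> {0..d} \<Longrightarrow> ((\<lambda>t. of_nat k * a (d-k) (x, t)) has_field_derivative of_nat k * Ay (d-k)) (at y)" for k
    by (rule DERIV_cmult, rule dAy)
  define R0 where "R0 = (\<Sum>j=0..m. r j (x, y) * p0^j)"
  define RX where "RX = (\<Sum>j=0..m. Rx j * p0^j)"
  define RY where "RY = (\<Sum>j=0..m. Ry j * p0^j)"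
  define RP where "RP = (\<Sum>j=0..m. of_nat j * r j (x, y) * p0^(j-1))"
  define FP where "FP = (\<Sum>k=0..d. of_nat k * a (d-k) (x, y) * p0^(k-1))"
  define FX where "FX = (\<Sum>k=0..d. Ax (d-k) * p0^k)"
  define FY where "FY = (\<Sum>k=0..d. Ay (d-k) * p0^k)"
  define FXP where "FXP = (\<Sum>k=0..d. of_nat k * Ax (d-k) * p0^(k-1))"
  define FYP where "FYP = (\<Sum>k=0..d. of_nat k * Ay (d-k) * p0^(k-1))"
  define FPP where "FPP = (\<Sum>k=0..d. of_nat (k-1) * (of_nat k * a (d-k) (x, y)) * p0^(k-1-1))"
  have FP0: "FP \<noteq> 0"
    unfolding FP_def
  proof (rule simple_root[where c = "\<lambda>k. a (d-k) (x, y)"])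
    show "a (d - d) (x, y) = 1" using assms(4) xyU by simp
    show "1 \<le> d" using assms(1) by simp
    have "{s. (\<Sum>k=0..d. a (d-k) (x, y) * s^k) = 0} = {p. Fpoly a d x y p = 0}"
      using Frev unfolding F_def by simp
    thus "card {s. (\<Sum>k=0..d. a (d-k) (x, y) * s^k) = 0} = d" using assms(5) xyU by simp
    show "(\<Sum>k=0..d. a (d-k) (x, y) * p0^k) = 0"
      using assms(10) xyV Frev unfolding F_def p0_def by metis
  qed
  have hx: "FX + FP * phx = 0"
  proof (rule deriv_zero_open)
    show "((\<lambda>t. \<Sum>k=0..d. a (d-k) (t, y) * \<phi> (t, y) ^ id k) has_field_derivative FX + FP * phx) (at x)"
      using deriv_psum[where c="\<lambda>k t. a (d-k) (t, y)" and c'="\<lambda>k. Ax (d-k)" and e=id and S="{0..d}", OF dAx dphx]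
      by (simp add: FX_def FP_def p0_def)
    show "open ((\<lambda>t. (t, y)) -` V)"
      by (rule continuous_open_vimage) (auto intro: assms(7))
    show "x \<in> (\<lambda>t. (t, y)) -` V" using xyV by simp
    fix t assume "t \<in> (\<lambda>t. (t, y)) -` V"
    hence "(t, y) \<in> V" by simp
    hence "F t y (\<phi> (t, y)) = 0" using assms(10) unfolding F_def by blast
    thus "(\<Sum>k=0..d. a (d-k) (t, y) * \<phi> (t, y) ^ id k) = 0"
      by (simp add: Frev)
  qed
  have hy: "FY + FP * phy = 0"
  proof (rule deriv_zero_open)
    show "((\<lambda>t. \<Sum>k=0..d. a (d-k) (x, t) * \<phi> (x, t) ^ id k) has_field_derivative FY + FP * phy) (at y)"
      using deriv_psum[where c="\<lambda>k t. a (d-k) (x, t)" and c'="\<lambda>k. Ay (d-k)" and e=id and S="{0..d}", OF dAy dphy]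
      by (simp add: FY_def FP_def p0_def)
    show "open ((\<lambda>t. (x, t)) -` V)"
      by (rule continuous_open_vimage) (auto intro: assms(7))
    show "y \<in> (\<lambda>t. (x, t)) -` V" using xyV by simp
    fix t assume "t \<in> (\<lambda>t. (x, t)) -` V"
    hence "(x, t) \<in> V" by simp
    hence "F x t (\<phi> (x, t)) = 0" using assms(10) unfolding F_def by blast
    thus "(\<Sum>k=0..d. a (d-k) (x, t) * \<phi> (x, t) ^ id k) = 0"
      by (simp add: Frev)
  qed

  have pdxF: "pdx F x y s = (\<Sum>k=0..d. Ax (d-k) * s^k)" for s
  proof -
    have "((\<lambda>t. \<Sum>k=0..d. a (d-k) (t, y) * (\<lambda>_. s) t ^ id k) has_field_derivative
        (\<Sum>k=0..d. Ax (d-k) * (\<lambda>_. s) x ^ id k) + (\<Sum>k=0..d. of_nat (id k) * a (d-k) (x, y) * (\<lambda>_. s) x ^ (id k - 1)) * 0) (at x)"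
      by (rule deriv_psum[where c="\<lambda>k t. a (d-k) (t, y)" and c'="\<lambda>k. Ax (d-k)", OF dAx]) auto
    from DERIV_imp_deriv[OF this] show ?thesis unfolding pdx_def Frev by simp
  qed
  have pdyF: "pdy F x y s = (\<Sum>k=0..d. Ay (d-k) * s^k)" for s
  proof -
    have "((\<lambda>t. \<Sum>k=0..d. a (d-k) (x, t) * (\<lambda>_. s) t ^ id k) has_field_derivative
        (\<Sum>k=0..d. Ay (d-k) * (\<lambda>_. s) y ^ id k) + (\<Sum>k=0..d. of_nat (id k) * a (d-k) (x, y) * (\<lambda>_. s) y ^ (id k - 1)) * 0) (at y)"
      by (rule deriv_psum[where c="\<lambda>k t. a (d-k) (x, t)" and c'="\<lambda>k. Ay (d-k)", OF dAy]) auto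
    from DERIV_imp_deriv[OF this] show ?thesis unfolding pdy_def Frev by simp
  qed
  have pdxR: "pdx R x y s = (\<Sum>j=0..m. Rx j * s^j)" for s
  proof -
    have "((\<lambda>t. \<Sum>j=0..m. r j (t, y) * (\<lambda>_. s) t ^ id j) has_field_derivative
        (\<Sum>j=0..m. Rx j * (\<lambda>_. s) x ^ id j) + (\<Sum>j=0..m. of_nat (id j) * r j (x, y) * (\<lambda>_. s) x ^ (id j - 1)) * 0) (at x)"
      by (rule deriv_psum[where c="\<lambda>j t. r j (t, y)" and c'="Rx", OF dRx]) auto
    from DERIV_imp_deriv[OF this] show ?thesis unfolding pdx_def Rdef by simp
  qed
  have pdyR: "pdy R x y s = (\<Sum>j=0..m. Ry j * s^j)" for s
  proof -
    have "((\<lambda>t. \<Sum>j=0..m. r j (x, t) * (\<lambda>_. s) t ^ id j) has_field_derivative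
        (\<Sum>j=0..m. Ry j * (\<lambda>_. s) y ^ id j) + (\<Sum>j=0..m. of_nat (id j) * r j (x, y) * (\<lambda>_. s) y ^ (id j - 1)) * 0) (at y)"
      by (rule deriv_psum[where c="\<lambda>j t. r j (x, t)" and c'="Ry", OF dRy]) auto
    from DERIV_imp_deriv[OF this] show ?thesis unfolding pdy_def Rdef by simp
  qed
  have pdpR: "pdp R x y s = (\<Sum>j=0..m. of_nat j * r j (x, y) * s^(j-1))" for s
  proof -
    have "((\<lambda>q. \<Sum>j=0..m. (\<lambda>_. r j (x, y)) q * (\<lambda>q. q) q ^ id j) has_field_derivative
       (\<Sum>j=0..m. 0 * s ^ id j) + (\<Sum>j=0..m. of_nat (id j) * r j (x, y) * s ^ (id j - 1)) * 1) (at s)"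
      by (rule deriv_psum) auto
    thus ?thesis unfolding pdp_def Rdef by (simp add: DERIV_imp_deriv)
  qed
  define DQ where "DQ = ((FXP + (FY + p0 * FYP)) * FP - (FX + p0 * FY) * FPP) / (FP * FP)"
  have eqQ: "pdp (\<lambda>x y p. (pdx F x y p + p * pdy F x y p) / pdp F x y p) x y p0 = DQ"
  proof -
    have n1: "((\<lambda>q. \<Sum>k=0..d. (\<lambda>_. Ax (d-k)) q * (\<lambda>q. q) q ^ id k) has_field_derivative
       (\<Sum>k=0..d. 0 * p0 ^ id k) + (\<Sum>k=0..d. of_nat (id k) * Ax (d-k) * p0 ^ (id k - 1)) * 1) (at p0)"
      by (rule deriv_psum) auto
    have n2: "((\<lambda>q. \<Sum>k=0..d. (\<lambda>_. Ay (d-k)) q * (\<lambda>q. q) q ^ id k) has_field_derivative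
       (\<Sum>k=0..d. 0 * p0 ^ id k) + (\<Sum>k=0..d. of_nat (id k) * Ay (d-k) * p0 ^ (id k - 1)) * 1) (at p0)"
      by (rule deriv_psum) auto
    have n3: "((\<lambda>q. \<Sum>k=0..d. (\<lambda>_. of_nat k * a (d-k) (x, y)) q * (\<lambda>q. q) q ^ (k - 1)) has_field_derivative
       (\<Sum>k=0..d. 0 * p0 ^ (k-1)) + (\<Sum>k=0..d. of_nat (k - 1) * (of_nat k * a (d-k) (x, y)) * p0 ^ (k - 1 - 1)) * 1) (at p0)"
      by (rule deriv_psum[where e="\<lambda>k. k - 1"]) auto
    have n4: "((\<lambda>q. \<Sum>k=0..d. Ay (d-k) * q ^ k) has_field_derivative FYP) (at p0)"
      using n2 by (simp add: FYP_def)
    have "((\<lambda>q. ((\<Sum>k=0..d. Ax (d-k) * q ^ k) + q * (\<Sum>k=0..d. Ay (d-k) * q ^ k)) /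
               (\<Sum>k=0..d. of_nat k * a (d-k) (x, y) * q ^ (k - 1))) has_field_derivative DQ) (at p0)"
    proof -
    have n1c: "((\<lambda>q. \<Sum>k=0..d. Ax (d-k) * q ^ k) has_field_derivative FXP) (at p0)"
      using n1 by (simp add: FXP_def)
    have n3c: "((\<lambda>q. \<Sum>k=0..d. of_nat k * a (d-k) (x, y) * q ^ (k - 1)) has_field_derivative FPP) (at p0)"
      using n3 by (simp add: FPP_def)
    have FP0': "(\<Sum>k=0..d. of_nat k * a (d-k) (x, y) * p0 ^ (k - 1)) \<noteq> 0" using FP0 by (simp add: FP_def)
      show ?thesis
      apply (rule DERIV_cong[OF DERIV_divide[OF DERIV_add[OF n1c DERIV_mult[OF DERIV_ident n4]] n3c FP0']])
      by (simp add: DQ_def FX_def FY_def FP_def algebra_simps)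
    qed
    hence dq: "deriv (\<lambda>p. (pdx F x y p + p * pdy F x y p) / pdp F x y p) p0 = DQ"
      unfolding pdxF pdyF Fpf by (rule DERIV_imp_deriv)
    have "pdp (\<lambda>x y p. (pdx F x y p + p * pdy F x y p) / pdp F x y p) x y p0
        = deriv (\<lambda>p. (pdx F x y p + p * pdy F x y p) / pdp F x y p) p0" by (rule pdp_def)
    with dq show ?thesis by simp
  qed

  have numx: "((\<lambda>t. \<Sum>j=0..m. r j (t, y) * \<phi> (t, y) ^ j) has_field_derivative RX + RP * phx) (at x)"
    using deriv_psum[where c="\<lambda>j t. r j (t, y)" and c'="Rx" and e=id and S="{0..m}", OF dRx dphx]
    by (simp add: RX_def RP_def p0_def)
  have denx: "((\<lambda>t. \<Sum>k=0..d. of_nat k * a (d-k) (t, y) * \<phi> (t, y) ^ (k - 1)) has_field_derivative FXP + FPP * phx) (at x)"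
    using deriv_psum[where c="\<lambda>k t. of_nat k * a (d-k) (t, y)" and c'="\<lambda>k. of_nat k * Ax (d-k)" and e="\<lambda>k. k - 1" and S="{0..d}", OF dAxc dphx]
    by (simp add: FXP_def FPP_def p0_def)
  have numy: "((\<lambda>t. \<Sum>j=0..m. r j (x, t) * \<phi> (x, t) ^ j) has_field_derivative RY + RP * phy) (at y)"
    using deriv_psum[where c="\<lambda>j t. r j (x, t)" and c'="Ry" and e=id and S="{0..m}", OF dRy dphy]
    by (simp add: RY_def RP_def p0_def)
  have deny: "((\<lambda>t. \<Sum>k=0..d. of_nat k * a (d-k) (x, t) * \<phi> (x, t) ^ (k - 1)) has_field_derivative FYP + FPP * phy) (at y)"
    using deriv_psum[where c="\<lambda>k t. of_nat k * a (d-k) (x, t)" and c'="\<lambda>k. of_nat k * Ay (d-k)" and e="\<lambda>k. k - 1" and S="{0..d}", OF dAyc dphy]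
    by (simp add: FYP_def FPP_def p0_def)
  have FP0x: "(\<Sum>k=0..d. of_nat k * a (d-k) (x, y) * \<phi> (x, y) ^ (k - 1)) \<noteq> 0"
    using FP0 by (simp add: FP_def p0_def)
  define D1 where "D1 = ((RX + RP * phx) * FP - R0 * (FXP + FPP * phx)) / (FP * FP)"
  define D2' where "D2' = ((RY + RP * phy) * FP - R0 * (FYP + FPP * phy)) / (FP * FP)"
  have eq1: "deriv (\<lambda>t. R t y (\<phi> (t, y)) / pdp F t y (\<phi> (t, y))) x = D1"
  proof -
    have "((\<lambda>t. (\<Sum>j=0..m. r j (t, y) * \<phi> (t, y) ^ j) / (\<Sum>k=0..d. of_nat k * a (d-k) (t, y) * \<phi> (t, y) ^ (k - 1)))
       has_field_derivative D1) (at x)"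
      by (rule DERIV_cong[OF DERIV_divide[OF numx denx FP0x]])
        (simp add: D1_def R0_def FP_def p0_def)
    from DERIV_imp_deriv[OF this] show ?thesis unfolding Rdef Fpf .
  qed
  have eq2: "deriv (\<lambda>t. R x t (\<phi> (x, t)) / pdp F x t (\<phi> (x, t)) * \<phi> (x, t)) y = D2' * p0 + R0 / FP * phy"
  proof -
    have dv: "((\<lambda>t. (\<Sum>j=0..m. r j (x, t) * \<phi> (x, t) ^ j) / (\<Sum>k=0..d. of_nat k * a (d-k) (x, t) * \<phi> (x, t) ^ (k - 1)))
       has_field_derivative D2') (at y)"
      by (rule DERIV_cong[OF DERIV_divide[OF numy deny FP0x]])
        (simp add: D2'_def R0_def FP_def p0_def)
    have "((\<lambda>t. (\<Sum>j=0..m. r j (x, t) * \<phi> (x, t) ^ j) / (\<Sum>k=0..d. of_nat k * a (d-k) (x, t) * \<phi> (x, t) ^ (k - 1)) * \<phi> (x, t))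
       has_field_derivative D2' * p0 + R0 / FP * phy) (at y)"
      by (rule DERIV_cong[OF DERIV_mult[OF dv dphy]])
        (simp add: R0_def FP_def p0_def mult_ac)
    from DERIV_imp_deriv[OF this] show ?thesis unfolding Rdef Fpf .
  qed
  have alg: "D1 + (D2' * p0 + R0 / FP * phy) =
     ((RX + p0 * RY) - DQ * R0 - (FX + p0 * FY) / FP * RP) / FP"
  proof -
    have phx': "phx = - FX / FP" using hx FP0 by (simp add: field_simps add_eq_0_iff)
    have phy': "phy = - FY / FP" using hy FP0 by (simp add: field_simps add_eq_0_iff)
    show ?thesis unfolding D1_def D2'_def DQ_def phx' phy' using FP0
      by (simp add: field_simps)
  qed
  show "(let F = Fpoly a d; R = rpoly r m;
         K = (\<lambda>x y p. pdx F x y p + p * pdy F x y p);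
         Q = (\<lambda>x y p. K x y p / pdp F x y p);
         G = (\<lambda>x y. R x y (\<phi> (x, y)) / pdp F x y (\<phi> (x, y)));
         p0 = \<phi> (x, y)
     in deriv (\<lambda>t. G t y) x + deriv (\<lambda>t. G x t * \<phi> (x, t)) y
        = ((pdx R x y p0 + p0 * pdy R x y p0) - pdp Q x y p0 * R x y p0
            - Q x y p0 * pdp R x y p0) / pdp F x y p0)"
    unfolding Let_def F_def[symmetric] R_def[symmetric] p0_def[symmetric]
    unfolding eq1 eq2 eqQ pdxR pdyR pdpR pdxF pdyF
    using alg Fpf[of x y p0] Rdef[of x y p0]
    by (simp add: RX_def RY_def RP_def FX_def FY_def FP_def R0_def)
qed

end
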